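(* Let $G$ be a graph and $l\ge1$ an integer. If $G$ has three distinct closed non-backtracking walks, each of length $l$, each starting and ending at the same vertex $v$, then $\mathrm{Abl}(G)\le 4l$.
   Context: A graph is $G=(V_G,E_G,t_G,h_G)$ with vertex set, edge set and tail/head maps (loops and multiple edges allowed). Directed edges are pairs $(e,\pm)$, with $(e,+)$ going from $t(e)$ to $h(e)$ and $(e,-)$ its inverse. A walk of length $m\ge1$ is a sequence $(u_1,\dots,u_m)$ of directed edges with the head of $u_i$ equal to the tail of $u_{i+1}$; it is closed if its start and end vertices coincide and non-backtracking if $u_{i+1}$ is never the inverse of $u_i$. The abelian girth $\mathrm{Abl}(G)$ is the minimum $m\ge1$ such that there is a closed non-backtracking walk $(u_1,\dots,u_m)$ in which, for every edge $e$, $(e,+)$ appears the same number of times as $(e,-)$ ($\infty$ if none exists). *)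

theory Defs
  imports Main "HOL-Library.Extended_Nat"
begin

text \<open>A graph G = (V, E, t, h): vertex set, edge set, tail and head maps
 (loops and multiple edges allowed). A directed edge is a pair (e, b) where
 b = True stands for (e,+) and b = False for (e,-).\<close>

definition is_graph :: "'v set \<Rightarrow> 'e set \<Rightarrow> ('e \<Rightarrow> 'v) \<Rightarrow> ('e \<Rightarrow> 'v) \<Rightarrow> bool" where
  "is_graph V E t h \<longleftrightarrow> (\<forall>e\<in>E. t e \<in> V \<and> h e \<in> V)"

definition dtail :: "('e \<Rightarrow> 'v) \<Rightarrow> ('e \<Rightarrow> 'v) \<Rightarrow> 'e \<times> bool \<Rightarrow> 'v" where
  "dtail t h u = (if snd u then t (fst u) else h (fst u))"

definition dhead :: "('e \<Rightarrow> 'v) \<Rightarrow> ('e \<Rightarrow> 'v) \<Rightarrow> 'e \<times> bool \<Rightarrow> 'v" where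
  "dhead t h u = (if snd u then h (fst u) else t (fst u))"

definition dinv :: "'e \<times> bool \<Rightarrow> 'e \<times> bool" where
  "dinv u = (fst u, \<not> snd u)"

definition is_walk :: "'v set \<Rightarrow> 'e set \<Rightarrow> ('e \<Rightarrow> 'v) \<Rightarrow> ('e \<Rightarrow> 'v) \<Rightarrow> ('e \<times> bool) list \<Rightarrow> bool" where
  "is_walk V E t h w \<longleftrightarrow> w \<noteq> [] \<and> (\<forall>i<length w. fst (w ! i) \<in> E) \<and>
     (\<forall>i. Suc i < length w \<longrightarrow> dhead t h (w ! i) = dtail t h (w ! Suc i))"

definition walk_start :: "('e \<Rightarrow> 'v) \<Rightarrow> ('e \<Rightarrow> 'v) \<Rightarrow> ('e \<times> bool) list \<Rightarrow> 'v" where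
  "walk_start t h w = dtail t h (hd w)"

definition walk_end :: "('e \<Rightarrow> 'v) \<Rightarrow> ('e \<Rightarrow> 'v) \<Rightarrow> ('e \<times> bool) list \<Rightarrow> 'v" where
  "walk_end t h w = dhead t h (last w)"

definition is_closed_walk :: "'v set \<Rightarrow> 'e set \<Rightarrow> ('e \<Rightarrow> 'v) \<Rightarrow> ('e \<Rightarrow> 'v) \<Rightarrow> ('e \<times> bool) list \<Rightarrow> bool" where
  "is_closed_walk V E t h w \<longleftrightarrow> is_walk V E t h w \<and> walk_start t h w = walk_end t h w"

definition non_backtracking :: "('e \<times> bool) list \<Rightarrow> bool" where
  "non_backtracking w \<longleftrightarrow> (\<forall>i. Suc i < length w \<longrightarrow> w ! Suc i \<noteq> dinv (w ! i))"

definition abelian_balanced :: "('e \<times> bool) list \<Rightarrow> bool" where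
  "abelian_balanced w \<longleftrightarrow> (\<forall>e. count_list w (e, True) = count_list w (e, False))"

definition abelian_girth :: "'v set \<Rightarrow> 'e set \<Rightarrow> ('e \<Rightarrow> 'v) \<Rightarrow> ('e \<Rightarrow> 'v) \<Rightarrow> enat" where
  "abelian_girth V E t h = Inf {enat (length w) | w.
     is_closed_walk V E t h w \<and> non_backtracking w \<and> abelian_balanced w}"

end

theory Submission
  imports Defs
begin

lemma dinv_dinv[simp]: "dinv (dinv x) = x" by (simp add: dinv_def)
lemma dinv_eq_iff[simp]: "dinv x = dinv y \<longleftrightarrow> x = y" by (cases x; cases y; auto simp: dinv_def)
lemma dinv_neq[simp]: "dinv x \<noteq> x" "x \<noteq> dinv x" by (cases x; auto simp: dinv_def)+
lemma dtail_dinv[simp]: "dtail t h (dinv x) = dhead t h x" by (simp add: dinv_def dtail_def dhead_def)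
lemma dhead_dinv[simp]: "dhead t h (dinv x) = dtail t h x" by (simp add: dinv_def dtail_def dhead_def)
lemma fst_dinv[simp]: "fst (dinv x) = fst x" by (simp add: dinv_def)

definition winv :: "('e \<times> bool) list \<Rightarrow> ('e \<times> bool) list" where
  "winv w = rev (map dinv w)"

definition cw :: "'v set \<Rightarrow> 'e set \<Rightarrow> ('e \<Rightarrow> 'v) \<Rightarrow> ('e \<Rightarrow> 'v) \<Rightarrow> 'v \<Rightarrow> ('e \<times> bool) list \<Rightarrow> bool" where
  "cw V E t h u w \<longleftrightarrow> w \<noteq> [] \<and> (\<forall>x\<in>set w. fst x \<in> E) \<and>
     successively (\<lambda>x y. dhead t h x = dtail t h y) w \<and> successively (\<lambda>x y. y \<noteq> dinv x) w \<and>
     dtail t h (hd w) = u \<and> dhead t h (last w) = u"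

definition good :: "'v set \<Rightarrow> 'e set \<Rightarrow> ('e \<Rightarrow> 'v) \<Rightarrow> ('e \<Rightarrow> 'v) \<Rightarrow> ('e \<times> bool) list \<Rightarrow> bool" where
  "good V E t h W \<longleftrightarrow> (\<exists>u. cw V E t h u W) \<and> abelian_balanced W"

lemma cw_iff: "cw V E t h u w \<longleftrightarrow> is_closed_walk V E t h w \<and> non_backtracking w \<and>
   walk_start t h w = u \<and> walk_end t h w = u"
  unfolding cw_def is_closed_walk_def is_walk_def non_backtracking_def walk_start_def walk_end_def
    successively_conv_nth
  by (auto simp: all_set_conv_all_nth)

lemma good_girth: "good V E t h W \<Longrightarrow> abelian_girth V E t h \<le> enat (length W)"
  unfolding good_def abelian_girth_def cw_iff
  by (intro Inf_lower) auto

lemma winv_simps[simp]: "winv [] = []" "winv (x # xs) = winv xs @ [dinv x]"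
  "winv (xs @ ys) = winv ys @ winv xs" "winv (winv xs) = xs" "length (winv xs) = length xs"
  "winv xs = [] \<longleftrightarrow> xs = []" "set (winv xs) = dinv ` set xs"
  by (auto simp: winv_def rev_map o_def)

lemma winv_hd: "xs \<noteq> [] \<Longrightarrow> hd (winv xs) = dinv (last xs)"
  by (simp add: winv_def hd_rev last_map)
lemma winv_last: "xs \<noteq> [] \<Longrightarrow> last (winv xs) = dinv (hd xs)"
  by (simp add: winv_def last_rev hd_map)

lemma winv_inj[simp]: "winv xs = winv ys \<longleftrightarrow> xs = ys"
  by (metis winv_simps(4))

lemma count_winv: "count_list (winv w) (e, b) = count_list w (e, \<not> b)"
proof -
  have "count_list (map dinv w) (dinv (e, \<not>b)) = count_list w (e, \<not> b)"
    by (rule count_list_map_conv) (metis dinv_eq_iff injI)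
  then show ?thesis by (simp add: winv_def dinv_def)
qed

lemma succ_chain_winv: "successively (\<lambda>x y. dhead t h x = dtail t h y) (winv w) \<longleftrightarrow>
   successively (\<lambda>x y. dhead t h x = dtail t h y) w"
  unfolding winv_def successively_rev successively_map
  by (rule arg_cong[where f = "\<lambda>P. successively P w"]) (auto simp: fun_eq_iff)

lemma succ_nb_winv: "successively (\<lambda>x y. y \<noteq> dinv x) (winv w) \<longleftrightarrow>
   successively (\<lambda>x y. y \<noteq> dinv x) w"
  unfolding winv_def successively_rev successively_map
  by (rule arg_cong[where f = "\<lambda>P. successively P w"]) (auto simp: fun_eq_iff)

lemma cw_winv: "cw V E t h u w \<Longrightarrow> cw V E t h u (winv w)"
  unfolding cw_def using succ_chain_winv succ_nb_winv
  by (auto simp: winv_hd winv_last)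

lemma Wc:
  assumes cx: "cw V E t h u x" and cy: "cw V E t h u y"
    and xs: "x = x' @ s" and ys: "y = y' @ s" and nx: "x' \<noteq> []" and ny: "y' \<noteq> []"
    and dl: "last x' \<noteq> last y'"
    and c1: "hd y \<noteq> dinv (last x)" and c2: "hd x \<noteq> dinv (last y)"
  shows "good V E t h (x @ y' @ winv x' @ winv y) \<and>
         length (x @ y' @ winv x' @ winv y) \<le> 2 * length x + 2 * length y"
proof -
  let ?C = "\<lambda>x y. dhead t h x = dtail t h y" and ?N = "\<lambda>x y. y \<noteq> dinv x"
  have hx: "hd x = hd x'" and hy: "hd y = hd y'" using xs ys nx ny by auto
  have x1: "successively ?C x'" "successively ?N x'" "\<forall>z\<in>set x'. fst z \<in> E"
    using cx xs unfolding cw_def by (auto simp: successively_append_iff)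
  have y1: "successively ?C y'" "successively ?N y'" "\<forall>z\<in>set y'. fst z \<in> E"
    using cy ys unfolding cw_def by (auto simp: successively_append_iff)
  have ex: "dhead t h (last x') = dhead t h (last y')"
  proof (cases "s = []")
    case True then show ?thesis using cx cy xs ys unfolding cw_def by auto
  next
    case False
    then have "dhead t h (last x') = dtail t h (hd s)" "dhead t h (last y') = dtail t h (hd s)"
      using cx cy xs ys nx ny unfolding cw_def by (auto simp: successively_append_iff)
    then show ?thesis by simp
  qed
  have ux: "dtail t h (hd x') = u" "dtail t h (hd y') = u" "dhead t h (last x) = u" "dhead t h (last y) = u"
    "dtail t h (hd x) = u" "dtail t h (hd y) = u"
    using cx cy hx hy unfolding cw_def by auto
  have cxx: "successively ?C x" "successively ?N x" "\<forall>z\<in>set x. fst z \<in> E" "x \<noteq> []"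
    using cx unfolding cw_def by auto
  have cyy: "successively ?C y" "successively ?N y" "\<forall>z\<in>set y. fst z \<in> E" "y \<noteq> []"
    using cy unfolding cw_def by auto
  have lw: "last (x @ y' @ winv x' @ winv y) = dinv (hd y)"
    using cyy by (simp add: winv_last)
  have "cw V E t h u (x @ y' @ winv x' @ winv y)"
    unfolding cw_def
    using x1 y1 cxx cyy ux ex nx ny dl c1 c2 hx hy lw
    by (auto simp: successively_append_iff succ_chain_winv succ_nb_winv winv_hd winv_last)
  moreover have "abelian_balanced (x @ y' @ winv x' @ winv y)"
    unfolding abelian_balanced_def using xs ys by (simp add: count_winv)
  ultimately show ?thesis unfolding good_def using xs ys by auto
qed

lemma cw_Cons_snoc:
  assumes "cw V E t h u (e # y2 @ [dinv e])" and "y2 \<noteq> []"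
  shows "cw V E t h (dhead t h e) y2"
  using assms unfolding cw_def
  by (auto simp: successively_append_iff successively_Cons)

lemma L:
  "cw V E t h u x \<Longrightarrow> cw V E t h u y \<Longrightarrow> dinv (last x) \<noteq> hd y \<Longrightarrow> last x \<noteq> last y \<Longrightarrow>
   \<exists>W. good V E t h W \<and> length W \<le> 2 * length x + 2 * length y"
proof (induction "length y" arbitrary: x y u rule: less_induct)
  case less
  note cx = less.prems(1) and cy = less.prems(2)
  have nex: "x \<noteq> []" and ney: "y \<noteq> []" using cx cy unfolding cw_def by auto
  show ?case
  proof (cases "hd x \<noteq> dinv (last y)")
    case True
    from Wc[OF cx cy, of x "[]" y] True less.prems nex ney show ?thesis by auto
  next
    case False
    note F1 = False
    show ?thesis
    proof (cases "hd x \<noteq> hd y")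
      case True
      have "last x \<noteq> dinv (hd y)" using less.prems(3) by auto
      with Wc[OF cx cw_winv[OF cy], of x "[]" "winv y"] True less.prems nex ney F1
      show ?thesis by (auto simp: winv_hd winv_last)
    next
      case False
      define e where "e = hd y"
      have hx: "hd x = e" using False e_def by auto
      have le: "last y = dinv e" using F1 False e_def by (metis dinv_dinv)
      obtain ys where y: "y = e # ys" using ney e_def by (cases y) auto
      have ysne: "ys \<noteq> []" using y le by auto
      obtain y2 where ys: "ys = y2 @ [dinv e]" using ysne le y
        by (metis append_butlast_last_id last_ConsR)
      have y2ne: "y2 \<noteq> []"
      proof
        assume "y2 = []"
        then have "successively (\<lambda>x y. y \<noteq> dinv x) [e, dinv e]" using cy y ys unfolding cw_def by simp
        then show False by simp
      qed
      have yy: "y = e # y2 @ [dinv e]" using y ys by simp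
      have cy2: "cw V E t h (dhead t h e) y2" using cw_Cons_snoc[OF cy[unfolded yy] y2ne] .
      have nb: "hd y2 \<noteq> dinv e" "dinv e \<noteq> dinv (last y2)"
        using cy yy y2ne unfolding cw_def by (auto simp: successively_append_iff successively_Cons)
      obtain xs where x: "x = e # xs" using nex hx by (cases x) auto
      have cx2: "cw V E t h (dhead t h e) (xs @ [e])"
      proof (cases "xs = []")
        case True then show ?thesis using cx x unfolding cw_def by auto
      next
        case False
        have "last x = last xs" using x False by simp
        then have "e \<noteq> dinv (last xs)" using less.prems(3) e_def by auto
        then show ?thesis using cx x False unfolding cw_def
          by (auto simp: successively_append_iff successively_Cons)
      qed
      have "length y2 < length y" using yy by simp
      from less.hyps[OF this cx2 cy2] nb obtain W where
        "good V E t h W" "length W \<le> 2 * length (xs @ [e]) + 2 * length y2" by auto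
      then show ?thesis using x yy by (intro exI[of _ W]) auto
    qed
  qed
qed

lemma single_decomp:
  assumes cy: "cw V E t h u y" and le0: "dinv (last y) = hd y"
  shows "\<exists>y2. y = hd y # y2 @ [dinv (hd y)] \<and> y2 \<noteq> [] \<and> cw V E t h (dhead t h (hd y)) y2 \<and>
     hd y2 \<noteq> dinv (hd y) \<and> last y2 \<noteq> hd y"
proof -
  define e where "e = hd y"
  have ney: "y \<noteq> []" using cy unfolding cw_def by auto
  have le: "last y = dinv e" using le0 e_def by (metis dinv_dinv)
  obtain ys where y: "y = e # ys" using ney e_def by (cases y) auto
  have ysne: "ys \<noteq> []" using y le by auto
  obtain y2 where ys: "ys = y2 @ [dinv e]" using ysne le y
    by (metis append_butlast_last_id last_ConsR)
  have y2ne: "y2 \<noteq> []"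
  proof
    assume "y2 = []"
    then have "successively (\<lambda>x y. y \<noteq> dinv x) [e, dinv e]" using cy y ys unfolding cw_def by simp
    then show False by simp
  qed
  have yy: "y = e # y2 @ [dinv e]" using y ys by simp
  have cy2: "cw V E t h (dhead t h e) y2" using cw_Cons_snoc[OF cy[unfolded yy] y2ne] .
  have nb: "hd y2 \<noteq> dinv e" "dinv e \<noteq> dinv (last y2)"
    using cy yy y2ne unfolding cw_def by (auto simp: successively_append_iff successively_Cons)
  show ?thesis using yy y2ne cy2 nb e_def by auto
qed

lemma rot:
  assumes cx: "cw V E t h u (e # xs)" and ne: "e \<noteq> dinv (last (e # xs))"
  shows "cw V E t h (dhead t h e) (xs @ [e])"
proof (cases "xs = []")
  case True then show ?thesis using cx unfolding cw_def by auto
next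
  case False
  then show ?thesis using cx ne False unfolding cw_def
    by (auto simp: successively_append_iff successively_Cons)
qed

lemma L2:
  assumes ca: "cw V E t h v a" and cb: "cw V E t h v b"
    and h1: "dinv (last b) = hd b" and h2: "hd b = hd a" and h3: "hd a \<noteq> dinv (last a)"
  shows "\<exists>W. good V E t h W \<and> length W \<le> 2 * length a + 2 * length b"
proof -
  obtain b1 where b1: "b = hd b # b1 @ [dinv (hd b)]" "b1 \<noteq> []" "cw V E t h (dhead t h (hd b)) b1"
    "hd b1 \<noteq> dinv (hd b)" "last b1 \<noteq> hd b"
    using single_decomp[OF cb h1] by blast
  have nea: "a \<noteq> []" using ca unfolding cw_def by auto
  obtain as where a: "a = hd a # as" using nea by (cases a) auto
  have cx: "cw V E t h (dhead t h (hd a)) (as @ [hd a])"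
    using rot[of V E t h v "hd a" as] ca a h3 by simp
  obtain W where W: "good V E t h W" "length W \<le> 2 * length (as @ [hd a]) + 2 * length b1"
  proof -
    have cb1: "cw V E t h (dhead t h (hd a)) b1" using b1(3) h2 by simp
    show ?thesis using L[OF cx cb1] b1(4,5) h2 that by auto
  qed
  have "length (as @ [hd a]) = length a" using arg_cong[OF a, of length] by simp
  moreover have "length b1 < length b" using arg_cong[OF b1(1), of length] by simp
  ultimately show ?thesis using W by (intro exI[of _ W]) auto
qed

lemma split_suffix:
  "length xs = length ys \<Longrightarrow> xs \<noteq> ys \<Longrightarrow>
   \<exists>x' y' s. xs = x' @ s \<and> ys = y' @ s \<and> x' \<noteq> [] \<and> y' \<noteq> [] \<and> last x' \<noteq> last y'"
proof (induction xs arbitrary: ys rule: rev_induct)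
  case Nil then show ?case by simp
next
  case (snoc x xs)
  then obtain ys' y where ys: "ys = ys' @ [y]" by (cases ys rule: rev_exhaust) auto
  show ?case
  proof (cases "x = y")
    case True
    then have "length xs = length ys'" "xs \<noteq> ys'" using snoc.prems ys by auto
    from snoc.IH[OF this] obtain x' y' s where "xs = x' @ s \<and> ys' = y' @ s \<and> x' \<noteq> [] \<and> y' \<noteq> [] \<and> last x' \<noteq> last y'"
      by blast
    then show ?thesis using ys True by (intro exI[of _ x'] exI[of _ y'] exI[of _ "s @ [y]"]) auto
  next
    case False
    then show ?thesis using ys by (intro exI[of _ "xs @ [x]"] exI[of _ ys] exI[of _ "[]"]) auto
  qed
qed

lemma Main:
  "cw V E t h v a \<Longrightarrow> cw V E t h v b \<Longrightarrow> length a = length b \<Longrightarrow> a \<noteq> b \<Longrightarrow> a \<noteq> winv b \<Longrightarrow>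
   \<exists>W. good V E t h W \<and> length W \<le> 4 * length a"
proof (induction "length a" arbitrary: a b v rule: less_induct)
  case less
  note ca = less.prems(1) and cb = less.prems(2) and len = less.prems(3)
  have nea: "a \<noteq> []" and neb: "b \<noteq> []" using ca cb unfolding cw_def by auto
  define p where "p = hd a"
  define q where "q = dinv (last a)"
  define r where "r = hd b"
  define s where "s = dinv (last b)"
  show ?case
  proof (cases "r \<noteq> q \<and> p \<noteq> s")
    case True
    obtain x' y' z where sp: "a = x' @ z" "b = y' @ z" "x' \<noteq> []" "y' \<noteq> []" "last x' \<noteq> last y'"
      using split_suffix[OF len less.prems(4)] by blast
    from Wc[OF ca cb sp] True len show ?thesis unfolding p_def q_def r_def s_def
      by (intro exI[of _ "a @ y' @ winv x' @ winv b"]) auto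
  next
    case F1: False
    show ?thesis
    proof (cases "s \<noteq> q \<and> p \<noteq> r")
      case True
      have len2: "length a = length (winv b)" using len by simp
      obtain x' y' z where sp: "a = x' @ z" "winv b = y' @ z" "x' \<noteq> []" "y' \<noteq> []" "last x' \<noteq> last y'"
        using split_suffix[OF len2 less.prems(5)] by blast
      from Wc[OF ca cw_winv[OF cb] sp] True len neb show ?thesis unfolding p_def q_def r_def s_def
        by (intro exI[of _ "a @ y' @ winv x' @ winv (winv b)"]) (auto simp: winv_hd winv_last)
    next
      case F2: False
      have key: "(r = q \<or> p = s) \<and> (s = q \<or> p = r)" using F1 F2 by blast
      show ?thesis
      proof (cases "r = s")
        case rs: True
        show ?thesis
        proof (cases "p = q")
          case True
          then have pr: "p = r" using key rs by blast
          obtain a1 where a1: "a = hd a # a1 @ [dinv (hd a)]" "a1 \<noteq> []" "cw V E t h (dhead t h (hd a)) a1"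
            using single_decomp[OF ca] True p_def q_def by metis
          obtain b1 where b1: "b = hd b # b1 @ [dinv (hd b)]" "b1 \<noteq> []" "cw V E t h (dhead t h (hd b)) b1"
            using single_decomp[OF cb] rs r_def s_def by metis
          have hb: "hd b = hd a" using pr p_def r_def by simp
          have cb1: "cw V E t h (dhead t h (hd a)) b1" using b1(3) hb by simp
          have la: "length a = length a1 + 2" using arg_cong[OF a1(1), of length] by simp
          have lb: "length b = length b1 + 2" using arg_cong[OF b1(1), of length] by simp
          have l1: "length a1 = length b1" using la lb len by simp
          have n1: "a1 \<noteq> b1" using a1(1) b1(1) hb less.prems(4) by metis
          have n2: "a1 \<noteq> winv b1"
          proof
            assume "a1 = winv b1"
            then have "a = winv b" using a1(1) b1(1) hb by (metis winv_simps(1,2,3) dinv_dinv append_Cons append_Nil)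
            then show False using less.prems(5) by simp
          qed
          have "length a1 < length a" using la by simp
          from less.hyps[OF this a1(3) cb1 l1 n1 n2] obtain W where
            "good V E t h W" "length W \<le> 4 * length a1" by blast
          then show ?thesis using la by (intro exI[of _ W]) auto
        next
          case False
          then have "p = r \<or> q = r" using key rs by blast
          then show ?thesis
          proof
            assume "p = r"
            from L2[OF ca cb] this False rs show ?thesis unfolding p_def q_def r_def s_def
              using len by auto
          next
            assume "q = r"
            from L2[OF cw_winv[OF ca] cb] this False rs nea show ?thesis unfolding p_def q_def r_def s_def
              using len by (auto simp: winv_hd winv_last)
          qed
        qed
      next
        case rs: False
        then have pq: "p = q" and "p = r \<or> p = s" using key by blast+
        then show ?thesis
        proof (elim disjE)
          assume "p = r"
          from L2[OF cb ca] this pq rs show ?thesis unfolding p_def q_def r_def s_def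
            using len by auto
        next
          assume "p = s"
          from L2[OF cw_winv[OF cb] ca] this pq rs neb show ?thesis unfolding p_def q_def r_def s_def
            using len by (auto simp: winv_hd winv_last)
        qed
      qed
    qed
  qed
qed

theorem lemma3p4:
  fixes V :: "'v set" and E :: "'e set" and t h :: "'e \<Rightarrow> 'v"
    and l :: nat and v :: 'v and w1 w2 w3 :: "('e \<times> bool) list"
  assumes "is_graph V E t h"
    and "l \<ge> 1"
    and "\<forall>w\<in>{w1, w2, w3}. is_closed_walk V E t h w \<and> non_backtracking w \<and>
            length w = l \<and> walk_start t h w = v \<and> walk_end t h w = v"
    and "w1 \<noteq> w2" and "w1 \<noteq> w3" and "w2 \<noteq> w3"
  shows "abelian_girth V E t h \<le> enat (4 * l)"
proof -
  have c: "cw V E t h v w1" "cw V E t h v w2" "cw V E t h v w3"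
    and l: "length w1 = l" "length w2 = l" "length w3 = l"
    using assms(3) by (auto simp: cw_iff)
  have "\<exists>W. good V E t h W \<and> length W \<le> 4 * length w1"
  proof (cases "w1 = winv w2")
    case False
    then show ?thesis using Main[OF c(1,2)] l assms(4) by auto
  next
    case True
    then have "w1 \<noteq> winv w3" using assms(6) by auto
    then show ?thesis using Main[OF c(1,3)] l assms(5) by auto
  qed
  then obtain W where W: "good V E t h W" "length W \<le> 4 * l" using l by auto
  have "abelian_girth V E t h \<le> enat (length W)" by (rule good_girth[OF W(1)])
  also have "\<dots> \<le> enat (4 * l)" using W(2) by simp
  finally show ?thesis .
qed

end
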